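(* With $Z,G,B,Y$ and $q_{00}=e^{-(1-q)\mu}$ as below, define $\theta_1=\mathbb E[Y]$, $\theta_2=q_{00}\,\mathbb E[Y\mid Z\le G]/\theta_1$ and $\theta_3=\mathrm{Var}[Y]/\theta_1^2-1/\theta_1$. Then $$\theta_1=\frac{p}{1-p}\,\frac{q}{1-q}\,(1-q_{00}),\qquad \theta_2=-\frac{q_{00}\log q_{00}}{1-q_{00}},\qquad \theta_3=\frac{2}{1-q_{00}}\Big(\frac{1-q}{q}-\theta_2+1\Big)-1.$$
   Context: Let $\mu>0$, $0<q<1$, $0<p<1$. Let $Z\sim\mathrm{Poisson}(\mu)$ and $G$ with $\mathbb P(G=k)=q^k(1-q)$ ($k\in\mathbb N_0$) be independent, $B=\min(Z,G)$, and, conditionally on $B$ (and on $Z,G$), let $Y=\sum_{i=1}^BW_i$ with $W_i$ i.i.d., $\mathbb P(W_i=k)=p^k(1-p)$, $k\in\mathbb N_0$. Here $Y$ models the photons emitted in one exposure by an initially bright Alexa 647 fluorophore, and $\{Z\le G\}$ is the event that it stays bright. *)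

theory Defs
  imports "HOL-Probability.Probability"
begin

text \<open>Joint law of (Z, G, Y): Z ~ Poisson(mu), G with P(G=k) = q^k (1-q) (i.e. geometric_pmf (1-q)),
  independent; B = min Z G; given (Z,G), Y is the sum of B i.i.d. W_i with P(W=k) = p^k (1-p)
  (i.e. geometric_pmf (1-p)).\<close>
definition alexa_joint :: "real \<Rightarrow> real \<Rightarrow> real \<Rightarrow> (nat \<times> nat \<times> nat) pmf" where
  "alexa_joint mu q p =
     bind_pmf (poisson_pmf mu) (\<lambda>z.
     bind_pmf (geometric_pmf (1 - q)) (\<lambda>g.
     map_pmf (\<lambda>ws. (z, g, sum_list ws)) (replicate_pmf (min z g) (geometric_pmf (1 - p)))))"

definition alexa_Y :: "nat \<times> nat \<times> nat \<Rightarrow> real" where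
  "alexa_Y x = real (snd (snd x))"

text \<open>The event Z \<le> G (the fluorophore stays bright).\<close>
definition alexa_bright :: "(nat \<times> nat \<times> nat) set" where
  "alexa_bright = {x. fst x \<le> fst (snd x)}"

end

theory Submission
  imports Defs
begin


lemma nn_geom_unfold:
  fixes q :: real
  assumes "0 < q" "q < 1"
  shows "(\<integral>\<^sup>+g. f g \<partial>geometric_pmf (1-q)) =
         f 0 * ennreal (1-q) + (\<integral>\<^sup>+g. f (Suc g) \<partial>geometric_pmf (1-q)) * ennreal q"
proof -
  have "(\<integral>\<^sup>+g. f g \<partial>geometric_pmf (1-q)) =
        (\<integral>\<^sup>+g. f g \<partial>(bind_pmf (bernoulli_pmf (1-q)) (\<lambda>b. if b then return_pmf 0 else map_pmf Suc (geometric_pmf (1-q)))))"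
    by (rule arg_cong[where f="\<lambda>M. \<integral>\<^sup>+g. f g \<partial>measure_pmf M"], rule geometric_bind_pmf_unfold) (use assms in auto)
  also have "\<dots> = f 0 * ennreal (1-q) + (\<integral>\<^sup>+g. f (Suc g) \<partial>geometric_pmf (1-q)) * ennreal q"
    using assms by (simp add: if_distrib)
  finally show ?thesis .
qed

definition fB :: "real \<Rightarrow> nat \<Rightarrow> real" where "fB q z = q * (1 - q^z) / (1 - q)"
definition kB :: "real \<Rightarrow> nat \<Rightarrow> real" where "kB q z = 2*q/(1-q)^2 * (1 - q^z - (1-q)*z*q^z)"

lemma fB_nonneg: "0 < q \<Longrightarrow> q < 1 \<Longrightarrow> 0 \<le> fB q z"
  unfolding fB_def by (simp add: power_le_one)

lemma G3:
  fixes q :: real assumes q: "0 < q" "q < 1"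
  shows "(\<integral>\<^sup>+g. (if z \<le> g then 1 else 0) \<partial>geometric_pmf (1-q)) = ennreal (q^z)"
proof (induction z)
  case 0
  then show ?case by simp
next
  case (Suc z)
  show ?case
    apply (subst nn_geom_unfold[OF q])
    using Suc q by (simp add: ennreal_mult' mult.commute)
qed

lemma G1:
  fixes q :: real assumes q: "0 < q" "q < 1"
  shows "(\<integral>\<^sup>+g. ennreal (real (min z g)) \<partial>geometric_pmf (1-q)) = ennreal (fB q z)"
proof (induction z)
  case 0
  then show ?case by (simp add: fB_def)
next
  case (Suc z)
  have "(\<integral>\<^sup>+g. ennreal (real (min (Suc z) (Suc g))) \<partial>geometric_pmf (1-q)) =
        (\<integral>\<^sup>+g. 1 + ennreal (real (min z g)) \<partial>geometric_pmf (1-q))"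
    by (intro nn_integral_cong) (simp add: ennreal_plus)
  also have "\<dots> = 1 + ennreal (fB q z)"
    by (subst nn_integral_add) (simp_all add: Suc measure_pmf.emeasure_space_1)
  finally show ?case
    apply (subst nn_geom_unfold[OF q])
    using q fB_nonneg[OF q, of z] 
    by (simp add: ennreal_mult'[symmetric] ennreal_plus[symmetric] fB_def field_simps del: ennreal_plus)
qed

lemma kB_rec: "0 < q \<Longrightarrow> q < 1 \<Longrightarrow> kB q (Suc z) = q * (2 + 2 * fB q z + kB q z)"
proof -
  assume q: "0 < q" "q < 1"
  have d: "(1 - q) \<noteq> 0" using q by simp
  have k1: "kB q n * (1-q)^2 = 2*q*(1 - q^n - (1-q)*n*q^n)" for n
    unfolding kB_def using d by simp
  have f1: "fB q z * (1-q) = q*(1-q^z)"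
    unfolding fB_def using d by simp
  have "q * (2 + 2 * fB q z + kB q z) * (1-q)^2 = q*(2*(1-q)^2 + 2*(fB q z*(1-q))*(1-q) + kB q z*(1-q)^2)"
    by (simp add: algebra_simps power2_eq_square)
  also have "\<dots> = q*(2*(1-q)^2 + 2*(q*(1-q^z))*(1-q) + 2*q*(1 - q^z - (1-q)*z*q^z))"
    by (simp only: k1 f1)
  also have "\<dots> = 2*q*(1 - q^Suc z - (1-q)*(Suc z)*q^Suc z)"
    by (simp add: power_Suc algebra_simps power2_eq_square)
  also have "\<dots> = kB q (Suc z) * (1-q)^2"
    by (simp only: k1)
  finally show ?thesis using d by simp
qed

lemma kB_nonneg: "0 < q \<Longrightarrow> q < 1 \<Longrightarrow> 0 \<le> kB q z"
  by (induction z) (auto simp: kB_rec fB_nonneg, simp add: kB_def)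

lemma G2:
  fixes q :: real assumes q: "0 < q" "q < 1"
  shows "(\<integral>\<^sup>+g. ennreal (real (min z g) * (real (min z g) + 1)) \<partial>geometric_pmf (1-q)) = ennreal (kB q z)"
proof (induction z)
  case 0
  then show ?case by (simp add: kB_def)
next
  case (Suc z)
  have "(\<integral>\<^sup>+g. ennreal (real (min (Suc z) (Suc g)) * (real (min (Suc z) (Suc g)) + 1)) \<partial>geometric_pmf (1-q)) =
        (\<integral>\<^sup>+g. (2 + 2 * ennreal (real (min z g))) + ennreal (real (min z g) * (real (min z g) + 1)) \<partial>geometric_pmf (1-q))"
  proof (intro nn_integral_cong)
    fix g
    define b where "b = real (min z g)"
    have b0: "0 \<le> b" by (simp add: b_def)
    have "(2 + 2 * ennreal b) + ennreal (b * (b + 1)) = ennreal (2 + 2*b + b*(b+1))"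
      using b0 by (simp add: ennreal_mult)
    also have "\<dots> = ennreal (real (min (Suc z) (Suc g)) * (real (min (Suc z) (Suc g)) + 1))"
      by (simp add: b_def algebra_simps)
    finally show "ennreal (real (min (Suc z) (Suc g)) * (real (min (Suc z) (Suc g)) + 1)) = (2 + 2 * ennreal (real (min z g))) + ennreal (real (min z g) * (real (min z g) + 1))"
      by (simp add: b_def)
  qed
  also have "\<dots> = (2 + 2 * ennreal (fB q z)) + ennreal (kB q z)"
    by (subst nn_integral_add) (simp_all add: Suc nn_integral_add nn_integral_cmult G1[OF q] measure_pmf.emeasure_space_1)
  finally have IHe: "(\<integral>\<^sup>+g. ennreal (real (min (Suc z) (Suc g)) * (real (min (Suc z) (Suc g)) + 1)) \<partial>geometric_pmf (1-q)) = (2 + 2 * ennreal (fB q z)) + ennreal (kB q z)" .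
  have "ennreal (q * (2 + 2 * fB q z + kB q z)) = ennreal q * ennreal (2 + 2 * fB q z + kB q z)"
    by (rule ennreal_mult') (use q in simp)
  also have "\<dots> = ennreal (2 + 2 * fB q z + kB q z) * ennreal q"
    by (simp add: mult.commute)
  also have "ennreal (2 + 2 * fB q z + kB q z) = 2 + 2 * ennreal (fB q z) + ennreal (kB q z)"
    using fB_nonneg[OF q, of z] kB_nonneg[OF q, of z] by (simp add: ennreal_mult)
  finally have E: "ennreal (q * (2 + 2 * fB q z + kB q z)) = (2 + 2 * ennreal (fB q z) + ennreal (kB q z)) * ennreal q" .
  show ?case
    apply (subst nn_geom_unfold[OF q])
    using IHe E q by (simp add: kB_rec)
qed

lemma G4:
  fixes q :: real assumes q: "0 < q" "q < 1"
  shows "(\<integral>\<^sup>+g. (if z \<le> g then ennreal c else 0) \<partial>geometric_pmf (1-q)) = ennreal (c * q^z)"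
proof -
  have "(\<integral>\<^sup>+g. (if z \<le> g then ennreal c else 0) \<partial>geometric_pmf (1-q)) =
        (\<integral>\<^sup>+g. ennreal c * (if z \<le> g then 1 else 0) \<partial>geometric_pmf (1-q))"
    by (intro nn_integral_cong) auto
  also have "\<dots> = ennreal c * ennreal (q^z)"
    by (subst nn_integral_cmult) (simp_all add: G3[OF q])
  also have "\<dots> = ennreal (c*q^z)"
    by (rule ennreal_mult''[symmetric]) (use q in simp)
  finally show ?thesis .
qed

lemma nn_pmf_sums:
  fixes P :: "nat pmf"
  assumes "(\<lambda>n. pmf P n * f n) sums s" "\<And>n. 0 \<le> f n"
  shows "(\<integral>\<^sup>+n. ennreal (f n) \<partial>P) = ennreal s"
proof -
  have "(\<integral>\<^sup>+n. ennreal (f n) \<partial>P) = (\<integral>\<^sup>+n. ennreal (pmf P n * f n) \<partial>count_space UNIV)"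
    by (subst nn_integral_measure_pmf) (simp add: ennreal_mult')
  also have "\<dots> = ennreal s"
    by (subst nn_integral_count_space_nat) (rule suminf_ennreal_eq, simp_all add: assms)
  finally show ?thesis .
qed

lemma exp_sums_n: "(\<lambda>n. real n * x^n / fact n) sums (x * exp (x::real))"
proof -
  have "(\<lambda>n. x^n / fact n * x) sums (exp x * x)"
    using exp_converges[of x] by (intro sums_mult2) (simp add: divide_inverse mult.commute)
  moreover have "(\<lambda>n. real (Suc n) * x^(Suc n) / fact (Suc n)) = (\<lambda>n. x^n / fact n * x)"
    by (rule ext) (simp add: field_simps del: of_nat_Suc)
  ultimately have "(\<lambda>n. real (Suc n) * x^(Suc n) / fact (Suc n)) sums (exp x * x + 0)" by simp
  then show ?thesis by (subst (asm) sums_Suc_iff) (simp add: mult.commute)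
qed

lemma P1:
  fixes q mu :: real assumes "0 \<le> q" "0 < mu"
  shows "(\<integral>\<^sup>+z. ennreal (q^z) \<partial>poisson_pmf mu) = ennreal (exp (-(1-q)*mu))"
proof (rule nn_pmf_sums)
  have "(\<lambda>n. exp (-mu) * ((mu*q)^n / fact n)) sums (exp (-mu) * exp (mu*q))"
    using exp_converges[of "mu*q"] by (intro sums_mult) (simp add: divide_inverse mult.commute)
  moreover have "exp (-mu) * exp (mu*q) = exp (-(1-q)*mu)"
    by (simp add: exp_add[symmetric] algebra_simps)
  moreover have "(\<lambda>n. pmf (poisson_pmf mu) n * q^n) = (\<lambda>n. exp (-mu) * ((mu*q)^n / fact n))"
    using assms(2) by (intro ext) (simp add: power_mult_distrib)
  ultimately show "(\<lambda>n. pmf (poisson_pmf mu) n * q^n) sums exp (-(1-q)*mu)"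
    by simp
qed (use assms in auto)

lemma P2:
  fixes q mu :: real assumes "0 \<le> q" "0 < mu"
  shows "(\<integral>\<^sup>+z. ennreal (real z * q^z) \<partial>poisson_pmf mu) = ennreal (mu * q * exp (-(1-q)*mu))"
proof (rule nn_pmf_sums)
  have "(\<lambda>n. exp (-mu) * (real n * (mu*q)^n / fact n)) sums (exp (-mu) * ((mu*q) * exp (mu*q)))"
    using exp_sums_n[of "mu*q"] by (intro sums_mult)
  moreover have "exp (-mu) * ((mu*q) * exp (mu*q)) = mu * q * exp (-(1-q)*mu)"
    by (simp add: exp_add[symmetric] algebra_simps)
  moreover have "(\<lambda>n. pmf (poisson_pmf mu) n * (real n * q^n)) = (\<lambda>n. exp (-mu) * (real n * (mu*q)^n / fact n))"
    using assms(2) by (intro ext) (simp add: power_mult_distrib)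
  ultimately show "(\<lambda>n. pmf (poisson_pmf mu) n * (real n * q^n)) sums (mu * q * exp (-(1-q)*mu))"
    by simp
qed (use assms in auto)

lemma nn_lin:
  fixes M :: "'a pmf"
  assumes "(\<integral>\<^sup>+x. ennreal (f x) \<partial>M) = ennreal a" "(\<integral>\<^sup>+x. ennreal (g x) \<partial>M) = ennreal b"
    and "\<And>x. 0 \<le> f x" "\<And>x. 0 \<le> g x" "0 \<le> c" "0 \<le> d" "0 \<le> e" "0 \<le> a" "0 \<le> b"
  shows "(\<integral>\<^sup>+x. ennreal (c * f x + d * g x + e) \<partial>M) = ennreal (c*a + d*b + e)"
proof -
  have "(\<integral>\<^sup>+x. ennreal (c * f x + d * g x + e) \<partial>M) =
        (\<integral>\<^sup>+x. ennreal c * ennreal (f x) + ennreal d * ennreal (g x) + ennreal e \<partial>M)"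
    using assms by (intro nn_integral_cong) (simp add: ennreal_mult)
  also have "\<dots> = ennreal c * ennreal a + ennreal d * ennreal b + ennreal e"
    using assms by (simp add: nn_integral_add nn_integral_cmult measure_pmf.emeasure_space_1)
  also have "\<dots> = ennreal (c*a + d*b + e)"
    using assms by (simp add: ennreal_mult)
  finally show ?thesis .
qed

lemma sum_id_real: "(\<Sum>i\<le>k. real i) = real k * (real k + 1) / 2"
  by (induction k) (simp_all add: field_simps)

lemma W1:
  fixes p :: real assumes p: "0 < p" "p < 1"
  shows "(\<integral>\<^sup>+x. ennreal (real x) \<partial>geometric_pmf (1-p)) = ennreal (p/(1-p))"
proof -
  have e: "(\<lambda>x. ennreal (real x)) = of_nat"
    by (rule ext) (simp add: ennreal_of_nat_eq_real_of_nat)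
  show ?thesis
    using nn_integral_neg_binomial_pmf_real[of "1-p" 1] p
    by (simp add: e)
qed

lemma W2:
  fixes p :: real assumes p: "0 < p" "p < 1"
  shows "(\<integral>\<^sup>+x. ennreal (real x ^ 2) \<partial>geometric_pmf (1-p)) = ennreal (p/(1-p) + 2 * (p/(1-p))^2)"
proof (rule nn_pmf_sums)
  have a: "summable (\<lambda>k. norm (real k * p^k))"
    using geometric_sums_times_norm[of p] p by (simp add: sums_iff mult.commute)
  have b: "summable (\<lambda>k. norm (p^k))"
    using p by (simp add: summable_geometric)
  have "(\<lambda>k. \<Sum>i\<le>k. (real i * p^i) * p^(k-i)) sums ((\<Sum>k. real k * p^k) * (\<Sum>k. p^k))"
    by (rule Cauchy_product_sums[OF a b])
  moreover have "(\<Sum>k. real k * p^k) = p / (1-p)^2"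
    using geometric_sums_times_n[of p] p by (simp add: sums_iff mult.commute)
  moreover have "(\<Sum>k. p^k) = 1 / (1-p)"
    using p by (simp add: suminf_geometric)
  moreover have "(\<Sum>i\<le>k. (real i * p^i) * p^(k-i)) = p^k * (real k * (real k + 1) / 2)" for k
  proof -
    have "(\<Sum>i\<le>k. (real i * p^i) * p^(k-i)) = (\<Sum>i\<le>k. p^k * real i)"
      by (intro sum.cong refl) (simp add: power_add[symmetric])
    then show ?thesis by (simp add: sum_distrib_left[symmetric] sum_id_real)
  qed
  ultimately have c: "(\<lambda>k. p^k * (real k * (real k + 1) / 2)) sums (p / (1-p)^2 * (1 / (1-p)))"
    by simp
  have "(\<lambda>k. (1-p) * (2 * (p^k * (real k * (real k + 1) / 2)) - real k * p^k)) sums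
        ((1-p) * (2 * (p / (1-p)^2 * (1 / (1-p))) - p / (1-p)^2))"
    using geometric_sums_times_n[of p] p by (intro sums_mult sums_diff sums_mult c) (simp_all add: mult.commute)
  moreover have "(1-p) * (2 * (p / (1-p)^2 * (1 / (1-p))) - p / (1-p)^2) = p/(1-p) + 2 * (p/(1-p))^2"
  proof -
    have d: "1 - p \<noteq> 0" using p by simp
    show ?thesis using d by (simp add: field_simps) algebra
  qed
  moreover have "(\<lambda>k. (1-p) * (2 * (p^k * (real k * (real k + 1) / 2)) - real k * p^k)) =
                 (\<lambda>n. pmf (geometric_pmf (1-p)) n * real n ^ 2)"
    using p by (intro ext) (simp add: field_simps power2_eq_square)
  ultimately show "(\<lambda>n. pmf (geometric_pmf (1-p)) n * real n ^ 2) sums (p/(1-p) + 2 * (p/(1-p))^2)"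
    by simp
qed simp

lemma nn_lin1:
  fixes M :: "'a pmf"
  assumes "(\<integral>\<^sup>+x. ennreal (f x) \<partial>M) = ennreal a" "\<And>x. 0 \<le> f x" "0 \<le> c" "0 \<le> e" "0 \<le> a"
  shows "(\<integral>\<^sup>+x. ennreal (c * f x + e) \<partial>M) = ennreal (c*a + e)"
  using nn_lin[OF assms(1) assms(1) assms(2) assms(2) assms(3), of 0 e] assms by simp

lemma R1:
  fixes p :: real assumes p: "0 < p" "p < 1"
  shows "(\<integral>\<^sup>+ws. ennreal (real (sum_list ws)) \<partial>replicate_pmf n (geometric_pmf (1-p))) = ennreal (real n * (p/(1-p)))"
proof (induction n)
  case 0
  then show ?case by simp
next
  case (Suc n)
  have m0: "0 \<le> p/(1-p)" using p by simp
  have n1: "0 \<le> real n * (p/(1-p))" using m0 by (intro mult_nonneg_nonneg) auto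
  have "(\<integral>\<^sup>+ws. ennreal (real (sum_list ws)) \<partial>replicate_pmf (Suc n) (geometric_pmf (1-p))) =
        (\<integral>\<^sup>+x. \<integral>\<^sup>+xs. ennreal (1 * real (sum_list xs) + real x) \<partial>replicate_pmf n (geometric_pmf (1-p)) \<partial>geometric_pmf (1-p))"
    by (simp add: add.commute)
  also have "\<dots> = (\<integral>\<^sup>+x. ennreal (1 * real x + real n * (p/(1-p))) \<partial>geometric_pmf (1-p))"
    by (intro nn_integral_cong, subst nn_lin1[OF Suc]) (use m0 n1 in \<open>auto simp: add.commute\<close>)
  also have "\<dots> = ennreal (1 * (p/(1-p)) + real n * (p/(1-p)))"
    by (rule nn_lin1[OF W1[OF p]]) (use m0 n1 in auto)
  also have "\<dots> = ennreal (real (Suc n) * (p/(1-p)))"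
  proof -
    have e: "\<And>m::real. 1 * m + real n * m = real (Suc n) * m" by (simp add: algebra_simps)
    show ?thesis by (rule arg_cong[where f=ennreal]) (rule e)
  qed
  finally show ?case .
qed

lemma R2:
  fixes p :: real assumes p: "0 < p" "p < 1"
  shows "(\<integral>\<^sup>+ws. ennreal (real (sum_list ws) ^ 2) \<partial>replicate_pmf n (geometric_pmf (1-p))) =
     ennreal (real n * (p/(1-p)) + real n * (real n + 1) * (p/(1-p))^2)"
proof (induction n)
  case 0
  then show ?case by simp
next
  case (Suc n)
  have m0: "0 \<le> p/(1-p)" using p by simp
  have n1: "0 \<le> real n * (p/(1-p))" using m0 by (intro mult_nonneg_nonneg) auto
  have n2: "0 \<le> real n * (p/(1-p)) + real n * (real n + 1) * (p/(1-p))^2" using m0 by (intro add_nonneg_nonneg mult_nonneg_nonneg) auto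
  have n3: "0 \<le> 2 * real n * (p/(1-p))" using m0 by (intro mult_nonneg_nonneg) auto
  have "(\<integral>\<^sup>+ws. ennreal (real (sum_list ws) ^ 2) \<partial>replicate_pmf (Suc n) (geometric_pmf (1-p))) =
        (\<integral>\<^sup>+x. \<integral>\<^sup>+xs. ennreal (1 * real (sum_list xs)^2 + (2 * real x) * real (sum_list xs) + real x ^ 2) \<partial>replicate_pmf n (geometric_pmf (1-p)) \<partial>geometric_pmf (1-p))"
    by (simp add: algebra_simps power2_eq_square)
  also have "\<dots> = (\<integral>\<^sup>+x. ennreal (1 * real x ^ 2 + (2 * real n * (p/(1-p))) * real x + (real n * (p/(1-p)) + real n * (real n + 1) * (p/(1-p))^2)) \<partial>geometric_pmf (1-p))"
    by (intro nn_integral_cong, subst nn_lin[OF Suc R1[OF p]]) (use m0 n1 n2 in \<open>auto simp: algebra_simps\<close>)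
  also have "\<dots> = ennreal (1 * (p/(1-p) + 2 * (p/(1-p))^2) + (2 * real n * (p/(1-p))) * (p/(1-p)) + (real n * (p/(1-p)) + real n * (real n + 1) * (p/(1-p))^2))"
    by (rule nn_lin[OF W2[OF p] W1[OF p]]) (use m0 n1 n2 n3 in auto)
  also have "\<dots> = ennreal (real (Suc n) * (p/(1-p)) + real (Suc n) * (real (Suc n) + 1) * (p/(1-p))^2)"
  proof -
    have e: "\<And>m::real. 1 * (m + 2*m^2) + (2*real n*m)*m + (real n*m + real n*(real n+1)*m^2) = real (Suc n)*m + real (Suc n)*(real (Suc n)+1)*m^2"
      by (simp add: algebra_simps power2_eq_square)
    show ?thesis by (rule arg_cong[where f=ennreal]) (rule e)
  qed
  finally show ?case .
qed

lemma nn_lin_gen: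
  fixes M :: "'a pmf"
  assumes f: "(\<integral>\<^sup>+x. ennreal (f x) \<partial>M) = ennreal a" and g: "(\<integral>\<^sup>+x. ennreal (g x) \<partial>M) = ennreal b"
    and "\<And>x. 0 \<le> f x" "\<And>x. 0 \<le> g x" "0 \<le> a" "0 \<le> b"
    and h: "\<And>x. 0 \<le> c + d1 * f x + d2 * g x"
  shows "(\<integral>\<^sup>+x. ennreal (c + d1 * f x + d2 * g x) \<partial>M) = ennreal (c + d1 * a + d2 * b)"
proof -
  have F: "integrable M f \<and> integral\<^sup>L M f = a"
    using nn_integral_eq_integrable[of f M a] f assms by simp
  have G: "integrable M g \<and> integral\<^sup>L M g = b"
    using nn_integral_eq_integrable[of g M b] g assms by simp
  have I: "integrable M (\<lambda>x. c + d1 * f x + d2 * g x)"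
  proof -
    have 1: "integrable M (\<lambda>x. c)" by simp
    have 2: "integrable M (\<lambda>x. d1 * f x)" using F by simp
    have 3: "integrable M (\<lambda>x. d2 * g x)" using G by simp
    show ?thesis using Bochner_Integration.integrable_add[OF Bochner_Integration.integrable_add[OF 1 2] 3] by simp
  qed
  have "integral\<^sup>L M (\<lambda>x. c + d1 * f x + d2 * g x) = c + d1 * a + d2 * b"
    using F G by (simp add: Bochner_Integration.integral_add Bochner_Integration.integrable_add)
  moreover have "(\<integral>\<^sup>+x. ennreal (c + d1 * f x + d2 * g x) \<partial>M) = ennreal (integral\<^sup>L M (\<lambda>x. c + d1 * f x + d2 * g x))"
    by (rule nn_integral_eq_integral[OF I]) (use h in auto)
  ultimately show ?thesis by simp
qed

lemma JY:
  fixes mu q p :: real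
  assumes mu: "0 < mu" and q: "0 < q" "q < 1" and p: "0 < p" "p < 1"
  shows "(\<integral>\<^sup>+x. ennreal (alexa_Y x) \<partial>alexa_joint mu q p) =
     ennreal (p/(1-p) * (q/(1-q)) * (1 - exp (-(1-q)*mu)))"
proof -
  have m0: "0 \<le> p/(1-p)" using p by simp
  have "(\<integral>\<^sup>+x. ennreal (alexa_Y x) \<partial>alexa_joint mu q p) =
     (\<integral>\<^sup>+z. \<integral>\<^sup>+g. ennreal (p/(1-p) * real (min z g) + 0) \<partial>geometric_pmf (1-q) \<partial>poisson_pmf mu)"
    by (simp add: alexa_joint_def alexa_Y_def R1[OF p] mult.commute)
  also have "\<dots> = (\<integral>\<^sup>+z. ennreal (p/(1-p) * fB q z + 0) \<partial>poisson_pmf mu)"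
    by (intro nn_integral_cong nn_lin1[OF G1[OF q]]) (use m0 fB_nonneg[OF q] in auto)
  also have "\<dots> = (\<integral>\<^sup>+z. ennreal (p/(1-p)*q/(1-q) + (-(p/(1-p)*q/(1-q))) * q^z + 0 * (real z * q^z)) \<partial>poisson_pmf mu)"
    by (intro nn_integral_cong arg_cong[where f=ennreal]) (simp add: fB_def algebra_simps diff_divide_distrib)
  also have "\<dots> = ennreal (p/(1-p)*q/(1-q) + (-(p/(1-p)*q/(1-q))) * exp (-(1-q)*mu) + 0 * (mu * q * exp (-(1-q)*mu)))"
  proof (rule nn_lin_gen[OF P1 P2])
    fix z :: nat
    have "0 \<le> p/(1-p) * fB q z" using m0 fB_nonneg[OF q] by (intro mult_nonneg_nonneg) auto
    also have "p/(1-p) * fB q z = p/(1-p)*q/(1-q) + (-(p/(1-p)*q/(1-q))) * q^z + 0 * (real z * q^z)"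
      by (simp add: fB_def algebra_simps diff_divide_distrib)
    finally show "0 \<le> p/(1-p)*q/(1-q) + (-(p/(1-p)*q/(1-q))) * q^z + 0 * (real z * q^z)" .
  qed (use q mu in auto)
  also have "\<dots> = ennreal (p/(1-p) * (q/(1-q)) * (1 - exp (-(1-q)*mu)))"
    by (rule arg_cong[where f=ennreal]) (simp add: right_diff_distrib)
  finally show ?thesis .
qed

lemma fB_alt: "fB q z = q/(1-q) - q/(1-q) * q^z"
  by (simp add: fB_def algebra_simps diff_divide_distrib)

lemma kB_alt: "kB q z = 2*q/(1-q)^2 - 2*q/(1-q)^2 * q^z - 2*q/(1-q)^2*(1-q)*(real z * q^z)"
proof -
  have gk: "\<And>K::real. K * (1 - q^z - (1-q)*z*q^z) = K - K * q^z - K*(1-q)*(real z * q^z)"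
    by (simp add: algebra_simps)
  show ?thesis unfolding kB_def by (rule gk)
qed

lemma JY2:
  fixes mu q p :: real
  assumes mu: "0 < mu" and q: "0 < q" "q < 1" and p: "0 < p" "p < 1"
  defines "m \<equiv> p/(1-p)" and "K \<equiv> 2*q/(1-q)^2" and "e \<equiv> exp (-(1-q)*mu)" and "A \<equiv> q/(1-q)"
  shows "(\<integral>\<^sup>+x. ennreal (alexa_Y x ^ 2) \<partial>alexa_joint mu q p) =
     ennreal ((m*A + m^2*K) + (-(m*A) - m^2*K) * e + (-(m^2*K*(1-q))) * (mu * q * e))"
proof -
  have m0: "0 \<le> m" using p by (simp add: m_def)
  have gen: "\<And>x y. m*(A - A*x) + m^2*(K - K*x - K*(1-q)*y) = (m*A + m^2*K) + (-(m*A) - m^2*K)*x + (-(m^2*K*(1-q)))*y"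
    by (simp add: algebra_simps)
  have alt: "m * fB q z + m^2 * kB q z = (m*A + m^2*K) + (-(m*A) - m^2*K) * q^z + (-(m^2*K*(1-q))) * (real z * q^z)" for z
    unfolding fB_alt kB_alt A_def[symmetric] K_def[symmetric] by (rule gen)
  have "(\<integral>\<^sup>+x. ennreal (alexa_Y x ^ 2) \<partial>alexa_joint mu q p) =
     (\<integral>\<^sup>+z. \<integral>\<^sup>+g. ennreal (m * real (min z g) + m^2 * (real (min z g) * (real (min z g) + 1)) + 0) \<partial>geometric_pmf (1-q) \<partial>poisson_pmf mu)"
    by (simp add: alexa_joint_def alexa_Y_def R2[OF p] m_def algebra_simps)
  also have "\<dots> = (\<integral>\<^sup>+z. ennreal (m * fB q z + m^2 * kB q z + 0) \<partial>poisson_pmf mu)"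
    by (intro nn_integral_cong nn_lin[OF G1[OF q] G2[OF q]]) (use m0 fB_nonneg[OF q] kB_nonneg[OF q] in auto)
  also have "\<dots> = (\<integral>\<^sup>+z. ennreal ((m*A + m^2*K) + (-(m*A) - m^2*K) * q^z + (-(m^2*K*(1-q))) * (real z * q^z)) \<partial>poisson_pmf mu)"
    by (intro nn_integral_cong arg_cong[where f=ennreal]) (simp add: alt)
  also have "\<dots> = ennreal ((m*A + m^2*K) + (-(m*A) - m^2*K) * e + (-(m^2*K*(1-q))) * (mu * q * e))"
    unfolding e_def
  proof (rule nn_lin_gen[OF P1 P2])
    fix z :: nat
    have "0 \<le> m * fB q z + m^2 * kB q z" using m0 fB_nonneg[OF q] kB_nonneg[OF q]
      by (intro add_nonneg_nonneg mult_nonneg_nonneg) auto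
    then show "0 \<le> (m*A + m^2*K) + (-(m*A) - m^2*K) * q^z + (-(m^2*K*(1-q))) * (real z * q^z)"
      by (simp only: alt)
  qed (use q mu in auto)
  finally show ?thesis .
qed

lemma ind_bright: "indicator alexa_bright (z, g, s) = (if z \<le> g then 1 else (0::'b::zero_neq_one))"
  by (simp add: alexa_bright_def indicator_def)

lemma JB:
  fixes mu q p :: real
  assumes mu: "0 < mu" and q: "0 < q" "q < 1" and p: "0 < p" "p < 1"
  shows "(\<integral>\<^sup>+x. ennreal (alexa_Y x * indicator alexa_bright x) \<partial>alexa_joint mu q p) =
     ennreal (p/(1-p) * (mu * q * exp (-(1-q)*mu)))"
proof -
  have m0: "0 \<le> p/(1-p)" using p by simp
  have inner: "(\<integral>\<^sup>+ws. ennreal (real (sum_list ws) * indicator alexa_bright (z, g, sum_list ws)) \<partial>replicate_pmf (min z g) (geometric_pmf (1-p)))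
     = (if z \<le> g then ennreal (real z * (p/(1-p))) else 0)" for z g
  proof (cases "z \<le> g")
    case True
    then show ?thesis using R1[OF p, of z] by (simp add: ind_bright min_def)
  next
    case False
    then show ?thesis by (simp add: ind_bright)
  qed
  have "(\<integral>\<^sup>+x. ennreal (alexa_Y x * indicator alexa_bright x) \<partial>alexa_joint mu q p) =
     (\<integral>\<^sup>+z. \<integral>\<^sup>+g. (if z \<le> g then ennreal (real z * (p/(1-p))) else 0) \<partial>geometric_pmf (1-q) \<partial>poisson_pmf mu)"
    by (simp add: alexa_joint_def alexa_Y_def inner)
  also have "\<dots> = (\<integral>\<^sup>+z. ennreal (p/(1-p) * (real z * q^z) + 0) \<partial>poisson_pmf mu)"
    by (intro nn_integral_cong) (simp add: G4[OF q] mult_ac)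
  also have "\<dots> = ennreal (p/(1-p) * (mu * q * exp (-(1-q)*mu)) + 0)"
    by (rule nn_lin1[OF P2]) (use q mu m0 in auto)
  finally show ?thesis by simp
qed

lemma JP:
  fixes mu q p :: real
  assumes mu: "0 < mu" and q: "0 < q" "q < 1" and p: "0 < p" "p < 1"
  shows "measure (alexa_joint mu q p) alexa_bright = exp (-(1-q)*mu)"
proof -
  have inner: "(\<integral>\<^sup>+ws. indicator alexa_bright (z, g, sum_list ws) \<partial>replicate_pmf (min z g) (geometric_pmf (1-p)))
     = (if z \<le> g then ennreal 1 else 0)" for z g
    by (simp add: ind_bright)
  have "emeasure (alexa_joint mu q p) alexa_bright = (\<integral>\<^sup>+x. indicator alexa_bright x \<partial>alexa_joint mu q p)"
    by simp
  also have "\<dots> = (\<integral>\<^sup>+z. \<integral>\<^sup>+g. (if z \<le> g then ennreal 1 else 0) \<partial>geometric_pmf (1-q) \<partial>poisson_pmf mu)"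
    by (simp only: alexa_joint_def nn_integral_bind_pmf nn_integral_map_pmf inner)
  also have "\<dots> = (\<integral>\<^sup>+z. ennreal (q^z) \<partial>poisson_pmf mu)"
    by (intro nn_integral_cong) (simp add: G4[OF q])
  also have "\<dots> = ennreal (exp (-(1-q)*mu))"
    by (rule P1) (use q mu in auto)
  finally show ?thesis by (simp add: measure_pmf.emeasure_eq_measure)
qed

lemma cond_nn:
  fixes J :: "'a pmf"
  assumes PA: "measure J A > 0" and f: "\<And>x. 0 \<le> f x"
  shows "(\<integral>\<^sup>+x. ennreal (f x) \<partial>cond_pmf J A) = (\<integral>\<^sup>+x. ennreal (1/measure J A * (f x * indicator A x) + 0) \<partial>J)"
proof -
  have ne: "set_pmf J \<inter> A \<noteq> {}" using PA measure_pmf_zero_iff[of J A] by auto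
  have "(\<integral>\<^sup>+x. ennreal (f x) \<partial>cond_pmf J A) = (\<integral>\<^sup>+x. ennreal (pmf (cond_pmf J A) x) * ennreal (f x) \<partial>count_space UNIV)"
    by (rule nn_integral_measure_pmf)
  also have "\<dots> = (\<integral>\<^sup>+x. ennreal (pmf J x) * ennreal (1/measure J A * (f x * indicator A x) + 0) \<partial>count_space UNIV)"
  proof (intro nn_integral_cong)
    fix x
    show "ennreal (pmf (cond_pmf J A) x) * ennreal (f x) = ennreal (pmf J x) * ennreal (1/measure J A * (f x * indicator A x) + 0)"
    proof (cases "x \<in> A")
      case True
      have "ennreal (pmf (cond_pmf J A) x) * ennreal (f x) = ennreal (pmf J x / measure J A * f x)"
        using True PA by (simp add: pmf_cond[OF ne] ennreal_mult'[symmetric])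
      also have "\<dots> = ennreal (pmf J x * (1/measure J A * (f x * indicator A x) + 0))"
        using True by simp
      also have "\<dots> = ennreal (pmf J x) * ennreal (1/measure J A * (f x * indicator A x) + 0)"
        by (rule ennreal_mult') simp
      finally show ?thesis .
    next
      case False
      then show ?thesis by (simp add: pmf_cond[OF ne])
    qed
  qed
  also have "\<dots> = (\<integral>\<^sup>+x. ennreal (1/measure J A * (f x * indicator A x) + 0) \<partial>J)"
    by (rule nn_integral_measure_pmf[symmetric])
  finally show ?thesis .
qed


lemma alg3:
  fixes m q e mu :: real
  assumes "0 < m" "0 < q" "q < 1" "0 < e" "e < 1"
  shows "(((m*(q/(1-q)) + m^2*(2*q/(1-q)^2)) + (-(m*(q/(1-q))) - m^2*(2*q/(1-q)^2)) * e + (-(m^2*(2*q/(1-q)^2)*(1-q))) * (mu * q * e))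
          - (m*(q/(1-q))*(1-e))^2) / (m*(q/(1-q))*(1-e))^2 - 1 / (m*(q/(1-q))*(1-e))
       = 2/(1-e)*((1-q)/q - e*mu*(1-q)/(1-e) + 1) - 1"
proof -
  define A where "A = q/(1-q)"
  define K where "K = 2*q/(1-q)^2"
  define EB where "EB = A*(1-e)"
  define EBB where "EBB = K*(1 - e - (1-q)*mu*q*e)"
  have A0: "A \<noteq> 0" using assms by (simp add: A_def)
  have EB0: "EB \<noteq> 0" using assms A0 by (simp add: EB_def)
  have h1: "((m*A + m^2*K) + (-(m*A) - m^2*K) * e + (-(m^2*K*(1-q))) * (mu * q * e)) = m*EB + m^2*EBB"
    by (simp add: EB_def EBB_def algebra_simps)
  have h2: "(m*EB + m^2*EBB - (m*EB)^2) / (m*EB)^2 - 1/(m*EB) = EBB/EB^2 - 1"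
    using EB0 assms by (simp add: field_simps power2_eq_square)
  have h3: "EBB/EB^2 = 2/(1-e)*((1-q)/q - e*mu*(1-q)/(1-e) + 1)"
  proof -
    have e1: "1 - e \<noteq> 0" and q1: "1 - q \<noteq> 0" and q0: "q \<noteq> 0" using assms by auto
    have c0: "(1-q)^2 \<noteq> 0" using q1 by simp
    have gen: "\<And>c X Y. c \<noteq> 0 \<Longrightarrow> Y \<noteq> 0 \<Longrightarrow> (2*q/c*X) / (q^2*Y/c) = 2*X/(q*Y)"
      using q0 by (simp add: field_simps power2_eq_square)
    have "EB^2 = q^2*(1-e)^2/(1-q)^2" by (simp add: EB_def A_def power_divide power_mult_distrib)
    then have "EBB/EB^2 = 2*(1 - e - (1-q)*mu*q*e)/(q*(1-e)^2)"
      unfolding EBB_def K_def using gen[OF c0, of "(1-e)^2"] e1 by simp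
    also have "\<dots> = 2/(1-e)*((1-q)/q - e*mu*(1-q)/(1-e) + 1)"
      using e1 q0 by (simp add: field_simps power2_eq_square)
    finally show ?thesis .
  qed
  have h4: "m*A*(1-e) = m*EB" by (simp add: EB_def)
  show ?thesis
    unfolding K_def[symmetric] A_def[symmetric] h1 h4 h2 h3 ..
qed

theorem mainTheorem11:
  fixes mu q p :: real
  assumes "0 < mu" and "0 < q" and "q < 1" and "0 < p" and "p < 1"
  defines "J \<equiv> alexa_joint mu q p"
      and "q00 \<equiv> exp (- (1 - q) * mu)"
  defines "\<theta>1 \<equiv> measure_pmf.expectation J alexa_Y"
  defines "\<theta>2 \<equiv> q00 * measure_pmf.expectation (cond_pmf J alexa_bright) alexa_Y / \<theta>1"
      and "\<theta>3 \<equiv> measure_pmf.variance J alexa_Y / \<theta>1 ^ 2 - 1 / \<theta>1"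
  shows "\<theta>1 = p / (1 - p) * (q / (1 - q)) * (1 - q00) \<and>
         \<theta>2 = - (q00 * ln q00) / (1 - q00) \<and>
         \<theta>3 = 2 / (1 - q00) * ((1 - q) / q - \<theta>2 + 1) - 1"
proof -
  note mu = assms(1) and q = assms(2,3) and p = assms(4,5)
  define m where "m = p/(1-p)"
  define A where "A = q/(1-q)"
  define K where "K = 2*q/(1-q)^2"
  have m0: "0 < m" using p by (simp add: m_def)
  have A0: "0 < A" using q by (simp add: A_def)
  have K0: "0 < K" using q by (simp add: K_def)
  have x0: "0 < (1-q)*mu" using q mu by simp
  have e0: "0 < q00" by (simp add: q00_def)
  have e1: "q00 < 1" using x0 by (simp add: q00_def algebra_simps)
  have Y0: "\<And>x. 0 \<le> alexa_Y x" by (simp add: alexa_Y_def)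
  have JY': "(\<integral>\<^sup>+x. ennreal (alexa_Y x) \<partial>J) = ennreal (m*A*(1-q00))"
    using JY[OF mu q p] by (simp add: J_def m_def A_def q00_def)
  have v1: "0 \<le> m*A*(1-q00)" using m0 A0 e1 by simp
  have IY: "integrable J alexa_Y \<and> measure_pmf.expectation J alexa_Y = m*A*(1-q00)"
    using nn_integral_eq_integrable[of alexa_Y J "m*A*(1-q00)"] JY' v1 Y0 by simp
  have th1: "\<theta>1 = m*A*(1-q00)" using IY by (simp add: \<theta>1_def)
  define v where "v = (m*A + m^2*K) + (-(m*A) - m^2*K) * q00 + (-(m^2*K*(1-q))) * (mu * q * q00)"
  have JY2': "(\<integral>\<^sup>+x. ennreal (alexa_Y x ^ 2) \<partial>J) = ennreal v"
    using JY2[OF mu q p] by (simp add: J_def m_def A_def K_def q00_def v_def)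
  have v0: "0 \<le> v"
  proof -
    have "exp (-((1-q)*mu)) * (1 + q*((1-q)*mu)) \<le> exp (-((1-q)*mu)) * exp ((1-q)*mu)"
    proof (rule mult_left_mono)
      have "1 + q*((1-q)*mu) \<le> 1 + (1-q)*mu" using q x0 mu by (simp add: mult_left_le_one_le less_imp_le)
      also have "\<dots> \<le> exp ((1-q)*mu)" by (rule exp_ge_add_one_self)
      finally show "1 + q*((1-q)*mu) \<le> exp ((1-q)*mu)" .
    qed simp
    then have i1: "exp (-((1-q)*mu)) * (1 + q*((1-q)*mu)) \<le> 1"
      by (metis exp_minus_inverse mult.commute)
    have eq: "q00 = exp (-((1-q)*mu))" by (simp add: q00_def algebra_simps)
    from i1 have "q00 * (1 + q*((1-q)*mu)) \<le> 1" unfolding eq .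
    then have "0 \<le> 1 - q00 - (1-q)*mu*q*q00" by (simp add: algebra_simps)
    then have "0 \<le> m*A*(1-q00) + m^2*(K*(1 - q00 - (1-q)*mu*q*q00))"
      using m0 A0 K0 e1 by (intro add_nonneg_nonneg mult_nonneg_nonneg) auto
    also have "\<dots> = v" by (simp add: v_def algebra_simps)
    finally show ?thesis .
  qed
  have IY2: "integrable J (\<lambda>x. alexa_Y x ^ 2) \<and> measure_pmf.expectation J (\<lambda>x. alexa_Y x ^ 2) = v"
    using nn_integral_eq_integrable[of "\<lambda>x. alexa_Y x ^ 2" J v] JY2' v0 by simp
  have var: "measure_pmf.variance J alexa_Y = v - (m*A*(1-q00))^2"
    using IY IY2 by (subst measure_pmf.variance_eq) auto
  have PA: "measure J alexa_bright = q00"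
    using JP[OF mu q p] by (simp add: J_def q00_def)
  have "(\<integral>\<^sup>+x. ennreal (alexa_Y x) \<partial>cond_pmf J alexa_bright) =
        (\<integral>\<^sup>+x. ennreal (1/measure J alexa_bright * (alexa_Y x * indicator alexa_bright x) + 0) \<partial>J)"
    by (rule cond_nn) (use PA e0 Y0 in auto)
  also have "\<dots> = ennreal (1/q00 * (m * (mu * q * q00)) + 0)"
  proof -
    have JB': "(\<integral>\<^sup>+x. ennreal (alexa_Y x * indicator alexa_bright x) \<partial>J) = ennreal (m * (mu * q * q00))"
      using JB[OF mu q p] by (simp add: J_def m_def q00_def)
    have nn: "0 \<le> m * (mu * q * q00)" using m0 mu q e0 by simp
    show ?thesis unfolding PA
      by (rule nn_lin1[OF JB']) (use e0 nn Y0 in \<open>auto simp: indicator_def\<close>)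
  qed
  finally have CE: "(\<integral>\<^sup>+x. ennreal (alexa_Y x) \<partial>cond_pmf J alexa_bright) = ennreal (m * mu * q)"
    using e0 by (simp add: mult.assoc)
  have ICE: "measure_pmf.expectation (cond_pmf J alexa_bright) alexa_Y = m * mu * q"
    using nn_integral_eq_integrable[of alexa_Y "cond_pmf J alexa_bright" "m * mu * q"] CE m0 mu q Y0 by simp
  have th2v: "\<theta>2 = q00 * ((1-q)*mu) / (1 - q00)"
    unfolding \<theta>2_def th1 ICE using m0 q e1 by (simp add: A_def field_simps)
  have lnq: "ln q00 = -((1-q)*mu)" by (simp add: q00_def algebra_simps)
  have th2: "\<theta>2 = - (q00 * ln q00) / (1 - q00)"
    unfolding th2v lnq by simp
  have th3: "\<theta>3 = 2 / (1 - q00) * ((1 - q) / q - \<theta>2 + 1) - 1"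
  proof -
    have "\<theta>3 = (v - (m*A*(1-q00))^2) / (m*A*(1-q00))^2 - 1 / (m*A*(1-q00))"
      unfolding \<theta>3_def var th1 ..
    also have "\<dots> = 2/(1-q00)*((1-q)/q - q00*mu*(1-q)/(1-q00) + 1) - 1"
      unfolding v_def A_def K_def by (rule alg3) (use m0 q e0 e1 in auto)
    also have "q00*mu*(1-q)/(1-q00) = \<theta>2" unfolding th2v by (simp add: algebra_simps)
    finally show ?thesis .
  qed
  show ?thesis using th1 th2 th3 by (simp add: m_def A_def)
qed

end
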